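(* Let $2\le p\le\infty$ and $2\le q<\infty$, and let $\lambda=\{\lambda_n\}$ be such that the multiplier operator $M_\lambda\colon H_p\to\ell_q$, $M_\lambda f=\{\lambda_n\hat f(n)\}$, is bounded. Then $M_\lambda\colon H_p\to\ell_q$ is compact if and only if \[\limsup_{n\to\infty}|\lambda_n|=0.\]
   Context: $H_p$ is the classical Hardy space on the open unit disk, and $f=\sum_{n\ge0}\hat f(n)z^n$ is the Taylor expansion of $f$. *)

theory Defs
  imports "HOL-Analysis.Analysis"
begin

definition integral_mean :: "real \<Rightarrow> (complex \<Rightarrow> complex) \<Rightarrow> real \<Rightarrow> real" where
  "integral_mean p f r =
     (integral {0..2*pi} (\<lambda>t. norm (f (complex_of_real r * cis t)) powr p) / (2*pi)) powr (1/p)"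

definition hardy_norm :: "ereal \<Rightarrow> (complex \<Rightarrow> complex) \<Rightarrow> ereal" where
  "hardy_norm p f =
     (if p = \<infinity> then (SUP z\<in>ball 0 1. ereal (norm (f z)))
      else (SUP r\<in>{0<..<1}. ereal (integral_mean (real_of_ereal p) f r)))"

definition hardy_space :: "ereal \<Rightarrow> (complex \<Rightarrow> complex) set" where
  "hardy_space p = {f. f holomorphic_on ball 0 1 \<and> hardy_norm p f < \<infinity>}"

definition taylor_coeff :: "(complex \<Rightarrow> complex) \<Rightarrow> nat \<Rightarrow> complex" where
  "taylor_coeff f n = (deriv ^^ n) f 0 / of_nat (fact n)"

definition in_lq :: "real \<Rightarrow> (nat \<Rightarrow> complex) \<Rightarrow> bool" where
  "in_lq q a \<longleftrightarrow> summable (\<lambda>n. norm (a n) powr q)"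

definition lq_norm :: "real \<Rightarrow> (nat \<Rightarrow> complex) \<Rightarrow> real" where
  "lq_norm q a = (\<Sum>n. norm (a n) powr q) powr (1/q)"

definition multiplier :: "(nat \<Rightarrow> complex) \<Rightarrow> (complex \<Rightarrow> complex) \<Rightarrow> nat \<Rightarrow> complex" where
  "multiplier lam f = (\<lambda>n. lam n * taylor_coeff f n)"

definition multiplier_bounded :: "ereal \<Rightarrow> real \<Rightarrow> (nat \<Rightarrow> complex) \<Rightarrow> bool" where
  "multiplier_bounded p q lam \<longleftrightarrow>
     (\<exists>C. \<forall>f\<in>hardy_space p. in_lq q (multiplier lam f) \<and>
            ereal (lq_norm q (multiplier lam f)) \<le> ereal C * hardy_norm p f)"

text \<open>Compactness: every norm-bounded sequence in H_p has a subsequence whose images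
  converge in l_q (sequential characterisation of relative compactness of the image of
  the unit ball in the metric space l_q).\<close>
definition multiplier_compact :: "ereal \<Rightarrow> real \<Rightarrow> (nat \<Rightarrow> complex) \<Rightarrow> bool" where
  "multiplier_compact p q lam \<longleftrightarrow>
     (\<forall>F :: nat \<Rightarrow> complex \<Rightarrow> complex. \<forall>B::real.
        (\<forall>k. F k \<in> hardy_space p \<and> hardy_norm p (F k) \<le> ereal B) \<longrightarrow>
        (\<exists>r a. strict_mono r \<and> in_lq q a \<and>
           (\<lambda>j. lq_norm q (\<lambda>n. multiplier lam (F (r j)) n - a n)) \<longlonglongrightarrow> 0))"

end

theory Submission
  imports Defs "HOL-Complex_Analysis.Complex_Analysis" "HOL-Library.Diagonal_Subsequence"
begin


lemma diag_subseq:
  fixes c :: "nat \<Rightarrow> nat \<Rightarrow> complex"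
  assumes bnd: "\<And>k n. norm (c k n) \<le> B"
  shows "\<exists>r. strict_mono r \<and> (\<forall>n. \<exists>l. (\<lambda>j. c (r j) n) \<longlonglongrightarrow> l)"
proof -
  interpret S: subseqs "\<lambda>n s. \<exists>l. (\<lambda>i. c (s i) n) \<longlonglongrightarrow> l"
  proof
    fix n and s :: "nat \<Rightarrow> nat"
    assume "strict_mono s"
    have "bounded (range (\<lambda>i. c (s i) n))"
      using bnd by (auto simp: bounded_iff)
    then obtain l r where "strict_mono r" "((\<lambda>i. c (s i) n) \<circ> r) \<longlonglongrightarrow> l"
      using bounded_imp_convergent_subsequence by blast
    then show "\<exists>r'. strict_mono r' \<and> (\<exists>l. (\<lambda>i. c ((s \<circ> r') i) n) \<longlonglongrightarrow> l)"
      by (auto simp: o_def)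
  qed
  have "\<exists>l. (\<lambda>i. c (S.diagseq i) n) \<longlonglongrightarrow> l" for n
  proof -
    obtain l where "(\<lambda>i. c ((S.diagseq o (+) (Suc n)) i) n) \<longlonglongrightarrow> l"
    proof (atomize_elim, rule S.diagseq_holds)
      fix r s n
      assume "strict_mono (r :: nat \<Rightarrow> nat)"
      assume "\<exists>l. (\<lambda>i. c (s i) n) \<longlonglongrightarrow> l"
      then obtain l where "((\<lambda>i. c i n) o s) \<longlonglongrightarrow> l"
        by (auto simp: o_def)
      hence "((\<lambda>i. c i n) o s o r) \<longlonglongrightarrow> l" using \<open>strict_mono r\<close>
        by (rule LIMSEQ_subseq_LIMSEQ)
      thus "\<exists>l. (\<lambda>i. c ((s \<circ> r) i) n) \<longlonglongrightarrow> l" by (auto simp add: o_def)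
    qed
    hence "(\<lambda>i. c (S.diagseq (i + Suc n)) n) \<longlonglongrightarrow> l" by (simp add: ac_simps)
    hence "(\<lambda>i. c (S.diagseq i) n) \<longlonglongrightarrow> l" by (rule LIMSEQ_offset)
    thus ?thesis ..
  qed
  then show ?thesis using S.subseq_diagseq by blast
qed

lemma taylor_coeff_monomial:
  "taylor_coeff (\<lambda>z. z ^ m) n = (if n = m then 1 else 0)"
proof -
  have "(deriv ^^ n) (\<lambda>z::complex. z ^ m) 0 = pochhammer (of_nat (Suc m - n)) n * (0 - 0) ^ (m - n)"
    using higher_deriv_power[of n 0 m 0] by simp
  moreover have "pochhammer (of_nat (Suc m - n)) n * (0::complex) ^ (m - n) = (if n = m then fact m else 0)"
  proof (cases "n = m")
    case True then show ?thesis by (simp add: pochhammer_fact)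
  next
    case False
    show ?thesis
    proof (cases "n < m")
      case True then show ?thesis by simp
    next
      case False2: False
      with False have "Suc m - n = 0" by simp
      then show ?thesis using False False2 by (simp add: pochhammer_0_left)
    qed
  qed
  ultimately show ?thesis by (simp add: taylor_coeff_def)
qed



lemma monomial_hardy:
  assumes "0 < p"
  shows "(\<lambda>z. z ^ m) \<in> hardy_space p \<and> hardy_norm p (\<lambda>z. z ^ m) \<le> 1"
proof -
  have hn: "hardy_norm p (\<lambda>z. z ^ m) \<le> 1"
  proof (cases "p = \<infinity>")
    case True
    have "ereal (norm (z ^ m)) \<le> 1" if "z \<in> ball 0 1" for z :: complex
      using that by (simp add: norm_power power_le_one)
    then show ?thesis using True by (simp add: hardy_norm_def SUP_le_iff)
  next
    case False
    define pr where "pr = real_of_ereal p"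
    have pr: "pr > 0" using assms False unfolding pr_def
      by (cases p) auto
    have "integral_mean pr (\<lambda>z. z ^ m) r \<le> 1" if "r \<in> {0<..<1}" for r
    proof -
      have "integral {0..2*pi} (\<lambda>t. norm ((complex_of_real r * cis t) ^ m) powr pr)
          = integral {0..2*pi} (\<lambda>t. (r ^ m) powr pr)"
        using that by (simp add: norm_power norm_mult)
      also have "\<dots> = 2 * pi * (r ^ m) powr pr" by simp
      finally have "integral_mean pr (\<lambda>z. z ^ m) r = ((r ^ m) powr pr) powr (1/pr)"
        unfolding integral_mean_def by simp
      also have "\<dots> = r ^ m" using pr that by (simp add: powr_powr)
      also have "\<dots> \<le> 1" using that by (simp add: power_le_one)
      finally show ?thesis .
    qed
    then show ?thesis using False by (simp add: hardy_norm_def SUP_le_iff pr_def)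
  qed
  moreover have "(\<lambda>z. z ^ m) holomorphic_on ball 0 1" by (intro holomorphic_intros)
  ultimately show ?thesis
    by (auto simp: hardy_space_def intro: le_less_trans[of _ 1])
qed

lemma cauchy_coeff_integral:
  assumes holf: "f holomorphic_on ball 0 1" and r: "0 < r" "r < 1"
  shows "((\<lambda>t. f (complex_of_real r * cis t) * cis (- (real n * t))) has_integral
          (2 * pi * taylor_coeff f n * r ^ n)) {0..2*pi}"
proof -
  have "continuous_on (cball 0 r) f"
    using holf r by (intro holomorphic_on_imp_continuous_on holomorphic_on_subset[OF holf]) auto
  moreover have "f holomorphic_on ball 0 r"
    using r by (intro holomorphic_on_subset[OF holf]) (auto simp: subset_eq)
  ultimately have "((\<lambda>u. f u / (u - 0) ^ (Suc n)) has_contour_integral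
                 ((2 * pi * \<i>) / (fact n) * (deriv ^^ n) f 0)) (circlepath 0 r)"
    using r by (intro Cauchy_has_contour_integral_higher_derivative_circlepath) auto
  then have "((\<lambda>t. f (0 + r * cis t) / (0 + r * cis t) ^ Suc n * r * \<i> * cis t) has_integral
               ((2 * pi * \<i>) / (fact n) * (deriv ^^ n) f 0)) {0..2*pi}"
    unfolding circlepath_def by (subst (asm) has_contour_integral_part_circlepath_iff) auto
  then have "((\<lambda>t. (r ^ n / \<i>) * (f (0 + r * cis t) / (0 + r * cis t) ^ Suc n * r * \<i> * cis t)) has_integral
               (r ^ n / \<i>) * ((2 * pi * \<i>) / (fact n) * (deriv ^^ n) f 0)) {0..2*pi}"
    by (rule has_integral_mult_right)
  moreover have "(r ^ n / \<i>) * (f (0 + r * cis t) / (0 + r * cis t) ^ Suc n * r * \<i> * cis t)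
      = f (complex_of_real r * cis t) * cis (- (real n * t))" for t
  proof -
    have "cis t ^ n * cis (- (real n * t)) = 1"
      by (subst Complex.DeMoivre) (simp add: cis_mult)
    then have "cis (- (real n * t)) = inverse (cis t ^ n)"
      by (metis inverse_unique mult.commute)
    then show ?thesis using r
      by (simp add: field_simps power_mult_distrib)
  qed
  moreover have "(r ^ n / \<i>) * ((2 * pi * \<i>) / (fact n) * (deriv ^^ n) f 0) = 2 * pi * taylor_coeff f n * r ^ n"
    by (simp add: taylor_coeff_def field_simps)
  ultimately show ?thesis by simp
qed

lemma cis_orth:
  "((\<lambda>t. cis (real m * t) * cis (- (real n * t))) has_integral (if n = m then 2 * pi else 0)) {0..2*pi}"
proof -
  define r :: real where "r = 1/2"
  have r: "0 < r" "r < 1" by (auto simp: r_def)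
  have "((\<lambda>t. (complex_of_real r * cis t) ^ m * cis (- (real n * t))) has_integral
          (2 * pi * taylor_coeff (\<lambda>z. z ^ m) n * r ^ n)) {0..2*pi}"
    using cauchy_coeff_integral[of "\<lambda>z. z ^ m" r n, OF _ r] by (simp add: holomorphic_intros)
  then have "((\<lambda>t. (1 / r ^ m) * ((complex_of_real r * cis t) ^ m * cis (- (real n * t)))) has_integral
          (1 / r ^ m) * (2 * pi * taylor_coeff (\<lambda>z. z ^ m) n * r ^ n)) {0..2*pi}"
    by (rule has_integral_mult_right)
  moreover have "(1 / r ^ m) * ((complex_of_real r * cis t) ^ m * cis (- (real n * t)))
     = cis (real m * t) * cis (- (real n * t))" for t
    using r by (simp add: power_mult_distrib) (metis Complex.DeMoivre)
  moreover have "(1 / r ^ m) * (2 * pi * taylor_coeff (\<lambda>z. z ^ m) n * r ^ n) = (if n = m then 2 * pi else 0)"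
    using r by (simp add: taylor_coeff_monomial)
  ultimately show ?thesis by simp
qed



lemma has_integral_Re_comp:
  "(f has_integral I) S \<Longrightarrow> ((\<lambda>x. Re (f x)) has_integral Re I) S"
  using has_integral_linear[OF _ bounded_linear_Re] by (simp add: o_def)

lemma of_real_cmod_sq: "(complex_of_real (cmod z))^2 = z * cnj z"
  using complex_norm_square[of z] by simp

lemma bessel:
  fixes g :: "real \<Rightarrow> complex" and a :: "nat \<Rightarrow> complex"
  assumes cont: "continuous_on {0..2*pi} g"
    and coef: "\<And>n. ((\<lambda>t. g t * cis (- (real n * t))) has_integral (2*pi*a n)) {0..2*pi}"
  shows "2*pi*(\<Sum>n<N. norm (a n)^2) \<le> integral {0..2*pi} (\<lambda>t. norm (g t)^2)"
proof -
  define P where "P t = (\<Sum>n<N. a n * cis (real n * t))" for t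
  define S where "S = (\<Sum>n<N. norm (a n)^2)"
  have I3: "((\<lambda>t. cnj (P t) * g t) has_integral (2 * pi * complex_of_real S)) {0..2*pi}"
  proof -
    have "((\<lambda>t. \<Sum>n<N. cnj (a n) * (g t * cis (- (real n * t)))) has_integral
           (\<Sum>n<N. cnj (a n) * (2*pi*a n))) {0..2*pi}"
      by (intro has_integral_sum has_integral_mult_right coef) auto
    moreover have "cnj (P t) * g t = (\<Sum>n<N. cnj (a n) * (g t * cis (- (real n * t))))" for t
      by (simp add: P_def cis_cnj sum_distrib_right sum_distrib_left mult_ac)
    moreover have "(\<Sum>n<N. cnj (a n) * (2*pi*a n)) = 2 * pi * complex_of_real S"
      by (simp add: S_def sum_distrib_left of_real_cmod_sq mult_ac)
    ultimately show ?thesis by simp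
  qed
  have I2: "((\<lambda>t. P t * cnj (P t)) has_integral (2 * pi * complex_of_real S)) {0..2*pi}"
  proof -
    have "((\<lambda>t. \<Sum>m<N. \<Sum>n<N. a n * cnj (a m) * (cis (real n * t) * cis (- (real m * t)))) has_integral
           (\<Sum>m<N. \<Sum>n<N. a n * cnj (a m) * (if m = n then 2 * pi else 0))) {0..2*pi}"
      by (intro has_integral_sum has_integral_mult_right cis_orth) auto
    moreover have "P t * cnj (P t) = (\<Sum>m<N. \<Sum>n<N. a n * cnj (a m) * (cis (real n * t) * cis (- (real m * t))))" for t
      by (simp add: P_def cis_cnj sum_distrib_right sum_distrib_left mult_ac)
    moreover have "(\<Sum>m<N. \<Sum>n<N. a n * cnj (a m) * (if m = n then 2 * pi else 0)) = 2 * pi * complex_of_real S"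
      by (simp add: S_def sum_distrib_left of_real_cmod_sq mult_ac if_distrib cong: if_cong)
    ultimately show ?thesis by simp
  qed
  have contg2: "continuous_on {0..2*pi} (\<lambda>t. norm (g t)^2)"
    by (intro continuous_intros cont)
  define G where "G = integral {0..2*pi} (\<lambda>t. norm (g t)^2)"
  have I1: "((\<lambda>t. norm (g t)^2) has_integral G) {0..2*pi}"
    unfolding G_def using integrable_continuous_interval[OF contg2] by (rule integrable_integral)
  have "((\<lambda>t. norm (g t)^2 + Re (P t * cnj (P t)) - 2 * Re (cnj (P t) * g t)) has_integral
          (G + Re (2 * pi * complex_of_real S) - 2 * Re (2 * pi * complex_of_real S))) {0..2*pi}"
    by (intro has_integral_diff has_integral_add has_integral_mult_right I1 has_integral_Re_comp I2 I3)
  moreover have "norm (g t)^2 + Re (P t * cnj (P t)) - 2 * Re (cnj (P t) * g t) = norm (g t - P t)^2" for t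
    unfolding cmod_power2 by (simp add: algebra_simps power2_eq_square)
  ultimately have "((\<lambda>t. norm (g t - P t)^2) has_integral (G - 2 * pi * S)) {0..2*pi}"
    by (simp add: mult_ac)
  then have "0 \<le> G - 2 * pi * S"
    by (rule has_integral_nonneg) auto
  then show ?thesis by (simp add: G_def S_def)
qed



lemma young_pt:
  fixes x M pr :: real
  assumes x: "0 \<le> x" and M: "0 < M" and pr: "2 \<le> pr"
  shows "x^2 \<le> (2/pr) * (x powr pr * M powr (2-pr)) + (1-2/pr) * M^2"
proof (cases "x = 0")
  case True
  have "0 \<le> 1-2/pr" using pr by (simp add: field_simps)
  then have "0 \<le> (1-2/pr) * M^2" by simp
  then show ?thesis using True pr by simp
next
  case False
  then have xp: "x > 0" using x by simp
  have a1: "0 \<le> 2/pr" using pr by simp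
  have a2: "0 \<le> 1-2/pr" using pr by (simp add: field_simps)
  have "((x/M) powr pr) powr (2/pr) * 1 powr (1-2/pr) \<le> (2/pr) * (x/M) powr pr + (1-2/pr) * 1"
    using xp M by (intro Youngs_inequality_0 a1 a2) auto
  moreover have "((x/M) powr pr) powr (2/pr) = (x/M)^2"
  proof -
    have "((x/M) powr pr) powr (2/pr) = (x/M) powr 2" using pr by (simp add: powr_powr)
    also have "\<dots> = (x/M)^2" using xp M by (simp add: powr_numeral)
    finally show ?thesis .
  qed
  ultimately have "(x/M)^2 \<le> (2/pr) * (x/M) powr pr + (1-2/pr)" by simp
  then have "(x/M)^2 * M^2 \<le> ((2/pr) * (x/M) powr pr + (1-2/pr)) * M^2"
    by (rule mult_right_mono) simp
  moreover have "(x/M)^2 * M^2 = x^2" using M by (simp add: power_divide)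
  moreover have "(x/M) powr pr * M^2 = x powr pr * M powr (2-pr)"
  proof -
    have "(x/M) powr pr * M^2 = x powr pr / M powr pr * M powr 2"
      using M xp by (simp add: powr_divide powr_numeral)
    also have "\<dots> = x powr pr * M powr (2-pr)" by (simp add: powr_diff)
    finally show ?thesis .
  qed
  ultimately show ?thesis by (metis (no_types, lifting) distrib_right mult.assoc)
qed


lemma circle_cont:
  assumes holf: "f holomorphic_on ball 0 1" and r: "0 < r" "r < 1"
  shows "continuous_on {0..2*pi} (\<lambda>t. f (complex_of_real r * cis t))"
proof (rule continuous_on_compose2[OF holomorphic_on_imp_continuous_on[OF holf]])
  show "continuous_on {0..2*pi} (\<lambda>t. complex_of_real r * cis t)"
    by (intro continuous_intros)
  show "(\<lambda>t. complex_of_real r * cis t) ` {0..2*pi} \<subseteq> ball 0 1"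
    using r by (auto simp: norm_mult)
qed

lemma circle_L2_bound:
  assumes f: "f \<in> hardy_space p" and p: "2 \<le> p" and hn: "hardy_norm p f \<le> ereal B"
    and r: "0 < r" "r < 1"
  shows "integral {0..2*pi} (\<lambda>t. norm (f (complex_of_real r * cis t))^2) \<le> 2*pi*B^2 \<and> 0 \<le> B"
proof -
  have holf: "f holomorphic_on ball 0 1" using f by (simp add: hardy_space_def)
  have cont: "continuous_on {0..2*pi} (\<lambda>t. f (complex_of_real r * cis t))"
    by (rule circle_cont[OF holf r])
  show ?thesis
  proof (cases "p = \<infinity>")
    case True
    have bz: "norm (f z) \<le> B" if "z \<in> ball 0 1" for z
      using hn True that by (simp add: hardy_norm_def SUP_le_iff)
    have B0: "0 \<le> B" using bz[of 0] by (meson norm_ge_zero order_trans centre_in_ball zero_less_one)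
    have "integral {0..2*pi} (\<lambda>t. norm (f (complex_of_real r * cis t))^2) \<le> integral {0..2*pi} (\<lambda>t. B^2)"
    proof (rule integral_le)
      show "(\<lambda>t. norm (f (complex_of_real r * cis t))^2) integrable_on {0..2*pi}"
        by (intro integrable_continuous_interval continuous_intros cont)
      show "(\<lambda>t. B^2) integrable_on {0..2*pi}" by (intro integrable_continuous_interval continuous_intros)
      fix t
      have "norm (f (complex_of_real r * cis t)) \<le> B"
        using r by (intro bz) (auto simp: norm_mult)
      then show "norm (f (complex_of_real r * cis t))^2 \<le> B^2"
        by (intro power_mono) auto
    qed
    then show ?thesis using B0 by (simp add: mult_ac)
  next
    case False
    define pr where "pr = real_of_ereal p"
    have pe: "p = ereal pr" and pr: "2 \<le> pr" using p False unfolding pr_def by (cases p; auto)+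
    define g where "g t = norm (f (complex_of_real r * cis t))" for t
    have contg: "continuous_on {0..2*pi} g" unfolding g_def by (intro continuous_intros cont)
    define I where "I = integral {0..2*pi} (\<lambda>t. g t powr pr)"
    have cp: "continuous_on {0..2*pi} (\<lambda>t. g t powr pr)"
      using pr by (intro continuous_on_powr' contg continuous_intros) (auto simp: g_def)
    have intp: "(\<lambda>t. g t powr pr) integrable_on {0..2*pi}"
      using cp by (rule integrable_continuous_interval)
    have I0: "0 \<le> I" unfolding I_def by (intro integral_nonneg intp) (auto simp: g_def)
    have "ereal (integral_mean pr f r) \<le> hardy_norm p f"
      unfolding hardy_norm_def using False r pe by (auto intro!: SUP_upper)
    then have "ereal (integral_mean pr f r) \<le> ereal B" using hn by (rule order_trans)
    then have meanB: "(I / (2*pi)) powr (1/pr) \<le> B"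
      unfolding integral_mean_def I_def g_def by simp
    have B0: "0 \<le> B" using meanB by (meson order_trans powr_ge_zero)
    have bound: "integral {0..2*pi} (\<lambda>t. g t ^ 2) \<le> 2*pi*M^2" if M: "B < M" for M
    proof -
      have Mp: "0 < M" using B0 M by simp
      have "I / (2*pi) = ((I / (2*pi)) powr (1/pr)) powr pr"
        using pr I0 by (simp add: powr_powr)
      also have "\<dots> \<le> M powr pr"
        using meanB M pr by (intro powr_mono2) auto
      finally have IM: "I \<le> 2*pi * M powr pr" by (simp add: field_simps)
      have "integral {0..2*pi} (\<lambda>t. g t ^ 2)
          \<le> integral {0..2*pi} (\<lambda>t. (2/pr * M powr (2-pr)) * g t powr pr + (1-2/pr) * M^2)"
      proof (rule integral_le)
        show "(\<lambda>t. g t ^ 2) integrable_on {0..2*pi}"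
          by (intro integrable_continuous_interval continuous_intros contg)
        show "(\<lambda>t. (2/pr * M powr (2-pr)) * g t powr pr + (1-2/pr) * M^2) integrable_on {0..2*pi}"
          by (intro integrable_continuous_interval continuous_intros cp)
        fix t
        show "g t ^ 2 \<le> (2/pr * M powr (2-pr)) * g t powr pr + (1-2/pr) * M^2"
          using young_pt[of "g t" M pr] Mp pr by (simp add: g_def mult_ac)
      qed
      also have "\<dots> = (2/pr * M powr (2-pr)) * I + (1-2/pr) * M^2 * (2*pi)"
      proof (rule integral_unique)
        have hc: "((\<lambda>t. (1-2/pr) * M^2) has_integral (2*pi*((1-2/pr) * M^2))) {0..2*pi}"
          using has_integral_const_real[of "(1-2/pr) * M^2" 0 "2*pi"] by simp
        have "((\<lambda>t. (2/pr * M powr (2-pr)) * g t powr pr + (1-2/pr) * M^2) has_integral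
              ((2/pr * M powr (2-pr)) * I + 2*pi*((1-2/pr) * M^2))) {0..2*pi}"
          unfolding I_def
          by (intro has_integral_add has_integral_mult_right integrable_integral intp hc)
        then show "((\<lambda>t. (2/pr * M powr (2-pr)) * g t powr pr + (1-2/pr) * M^2) has_integral
              ((2/pr * M powr (2-pr)) * I + (1-2/pr) * M^2 * (2*pi))) {0..2*pi}"
          by (simp add: mult_ac)
      qed
      also have "\<dots> \<le> (2/pr * M powr (2-pr)) * (2*pi * M powr pr) + (1-2/pr) * M^2 * (2*pi)"
        using IM pr by (intro add_right_mono mult_left_mono) auto
      also have "(2/pr * M powr (2-pr)) * (2*pi * M powr pr) = 2/pr * 2 * pi * M^2"
        using Mp by (simp add: powr_diff powr_numeral field_simps)
      finally show ?thesis using pr by (simp add: field_simps)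
    qed
    have "integral {0..2*pi} (\<lambda>t. g t ^ 2) \<le> 2*pi*B^2"
    proof (rule tendsto_le[of "at_right B"])
      show "at_right B \<noteq> bot" by simp
      show "((\<lambda>M. 2*pi*M^2) \<longlongrightarrow> 2*pi*B^2) (at_right B)"
        by (intro tendsto_intros)
      show "((\<lambda>M. integral {0..2*pi} (\<lambda>t. g t ^ 2)) \<longlongrightarrow> integral {0..2*pi} (\<lambda>t. g t ^ 2)) (at_right B)"
        by simp
      show "\<forall>\<^sub>F M in at_right B. integral {0..2*pi} (\<lambda>t. g t ^ 2) \<le> 2*pi*M^2"
        using eventually_at_right_less[of B] by (rule eventually_mono) (rule bound)
    qed
    then show ?thesis using B0 by (simp add: g_def)
  qed
qed

lemma coeff_l2:
  assumes f: "f \<in> hardy_space p" and p: "2 \<le> p" and hn: "hardy_norm p f \<le> ereal B"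
  shows "(\<Sum>n<N. norm (taylor_coeff f n)^2) \<le> B^2 \<and> 0 \<le> B"
proof -
  have holf: "f holomorphic_on ball 0 1" using f by (simp add: hardy_space_def)
  have B0: "0 \<le> B" using circle_L2_bound[OF f p hn, of "1/2"] by simp
  have rb: "(\<Sum>n<N. norm (taylor_coeff f n)^2 * r^(2*n)) \<le> B^2" if r: "0 < r" "r < 1" for r
  proof -
    have "2*pi*(\<Sum>n<N. norm (taylor_coeff f n * r^n)^2) \<le> integral {0..2*pi} (\<lambda>t. norm (f (complex_of_real r * cis t))^2)"
      using cauchy_coeff_integral[OF holf r]
      by (intro bessel circle_cont[OF holf r]) (simp add: mult_ac)
    also have "\<dots> \<le> 2*pi*B^2" using circle_L2_bound[OF f p hn r] by simp
    finally have "(\<Sum>n<N. norm (taylor_coeff f n * r^n)^2) \<le> B^2" by simp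
    moreover have "norm (taylor_coeff f n * r^n)^2 = norm (taylor_coeff f n)^2 * r^(2*n)" for n
      using r by (simp add: norm_mult norm_power power_mult_distrib power_mult[symmetric] mult.commute)
    ultimately show ?thesis by simp
  qed
  have "(\<Sum>n<N. norm (taylor_coeff f n)^2) \<le> B^2"
  proof (rule tendsto_le[of "at_left 1"])
    show "at_left (1::real) \<noteq> bot" by simp
    show "((\<lambda>r. (\<Sum>n<N. norm (taylor_coeff f n)^2 * r^(2*n))) \<longlongrightarrow> (\<Sum>n<N. norm (taylor_coeff f n)^2)) (at_left 1)"
    proof -
      have "((\<lambda>r::real. (\<Sum>n<N. norm (taylor_coeff f n)^2 * r^(2*n))) \<longlongrightarrow> (\<Sum>n<N. norm (taylor_coeff f n)^2 * 1^(2*n))) (at_left 1)"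
        by (intro tendsto_intros)
      then show ?thesis by simp
    qed
    show "((\<lambda>r. B^2) \<longlongrightarrow> B^2) (at_left 1)" by simp
    show "\<forall>\<^sub>F r in at_left 1. (\<Sum>n<N. norm (taylor_coeff f n)^2 * r^(2*n)) \<le> B^2"
      using eventually_at_left_real[of 0 "1::real"] rb by (auto elim: eventually_mono)
  qed
  then show ?thesis using B0 by simp
qed



lemma lq_single_le:
  assumes q: "0 < q" and s: "summable (\<lambda>n. norm (x n) powr q)"
  shows "norm (x m) \<le> lq_norm q x"
proof -
  have "sum (\<lambda>n. norm (x n) powr q) {m} \<le> (\<Sum>n. norm (x n) powr q)"
    by (rule sum_le_suminf[OF s]) auto
  then have "norm (x m) powr q \<le> (\<Sum>n. norm (x n) powr q)" by simp
  then have "(norm (x m) powr q) powr (1/q) \<le> (\<Sum>n. norm (x n) powr q) powr (1/q)"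
    using q by (intro powr_mono2) auto
  then show ?thesis using q by (simp add: lq_norm_def powr_powr)
qed

lemma compact_imp_limsup:
  assumes p: "2 \<le> p" and q: "2 \<le> q" and comp: "multiplier_compact p q lam"
  shows "limsup (\<lambda>n. ereal (norm (lam n))) = 0"
proof (rule ccontr)
  assume ne: "limsup (\<lambda>n. ereal (norm (lam n))) \<noteq> 0"
  have "0 \<le> limsup (\<lambda>n. ereal (norm (lam n)))"
    by (intro le_Limsup) auto
  with ne have "0 < limsup (\<lambda>n. ereal (norm (lam n)))" by simp
  then obtain \<delta> where d0: "0 < ereal \<delta>" and dl: "ereal \<delta> < limsup (\<lambda>n. ereal (norm (lam n)))"
    using ereal_dense2 by blast
  have "\<not> eventually (\<lambda>n. ereal (norm (lam n)) \<le> ereal \<delta>) sequentially"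
  proof
    assume "eventually (\<lambda>n. ereal (norm (lam n)) \<le> ereal \<delta>) sequentially"
    then have "limsup (\<lambda>n. ereal (norm (lam n))) \<le> ereal \<delta>" by (rule Limsup_bounded)
    with dl show False by simp
  qed
  from not_eventually_sequentiallyD[OF this] obtain s :: "nat \<Rightarrow> nat" where s: "strict_mono s"
    and sd0: "\<forall>k. \<not> ereal (norm (lam (s k))) \<le> ereal \<delta>" by blast
  have sd: "\<delta> < norm (lam (s k))" for k using sd0 by (simp add: not_le)
  define F where "F k = (\<lambda>z::complex. z ^ (s k))" for k
  have p0: "0 < p" using p by (cases p) auto
  have hyp: "\<And>k. F k \<in> hardy_space p \<and> hardy_norm p (F k) \<le> ereal 1"
    using monomial_hardy[OF p0] by (simp add: F_def one_ereal_def)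
  from comp[unfolded multiplier_compact_def, rule_format, of F 1, OF hyp]
  obtain r :: "nat \<Rightarrow> nat" and a where r: "strict_mono r" and a: "in_lq q a"
    and lim: "(\<lambda>j. lq_norm q (\<lambda>n. multiplier lam (F (r j)) n - a n)) \<longlonglongrightarrow> 0"
    by blast
  define t where "t = s \<circ> r"
  have t: "strict_mono t" unfolding t_def using s r by (rule strict_mono_o)
  have q0: "0 < q" using q by simp
  have mb: "multiplier lam (F (r j)) n = (if n = t j then lam n else 0)" for j n
    by (simp add: multiplier_def F_def taylor_coeff_monomial t_def)
  have bound: "norm (lam (t j) - a (t j)) \<le> lq_norm q (\<lambda>n. multiplier lam (F (r j)) n - a n)" for j
  proof -
    have "summable (\<lambda>n. norm (multiplier lam (F (r j)) n - a n) powr q)"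
    proof (subst summable_cong)
      show "\<forall>\<^sub>F n in sequentially. norm (multiplier lam (F (r j)) n - a n) powr q = norm (a n) powr q"
        unfolding eventually_sequentially by (rule exI[of _ "Suc (t j)"]) (auto simp: mb)
      show "summable (\<lambda>n. norm (a n) powr q)" using a by (simp add: in_lq_def)
    qed
    from lq_single_le[OF q0 this, of "t j"] show ?thesis by (simp add: mb)
  qed
  have "(\<lambda>n. norm (a n) powr q) \<longlonglongrightarrow> 0"
    using a unfolding in_lq_def by (rule summable_LIMSEQ_zero)
  then have "(\<lambda>n. (norm (a n) powr q) powr (1/q)) \<longlonglongrightarrow> 0"
    by (rule tendsto_zero_powrI[OF _ tendsto_const]) (use q0 in auto)
  then have "(\<lambda>n. norm (a n)) \<longlonglongrightarrow> 0" using q0 by (simp add: powr_powr)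
  then have at: "(\<lambda>j. norm (a (t j))) \<longlonglongrightarrow> 0"
    using LIMSEQ_subseq_LIMSEQ[OF _ t] by (simp add: o_def)
  have "(\<lambda>j. lq_norm q (\<lambda>n. multiplier lam (F (r j)) n - a n) + norm (a (t j))) \<longlonglongrightarrow> 0 + 0"
    by (intro tendsto_add lim at)
  then have "eventually (\<lambda>j. lq_norm q (\<lambda>n. multiplier lam (F (r j)) n - a n) + norm (a (t j)) < \<delta>) sequentially"
    using d0 by (intro order_tendstoD) auto
  then obtain N where "\<forall>j\<ge>N. lq_norm q (\<lambda>n. multiplier lam (F (r j)) n - a n) + norm (a (t j)) < \<delta>"
    unfolding eventually_sequentially by blast
  then have j: "lq_norm q (\<lambda>n. multiplier lam (F (r N)) n - a n) + norm (a (t N)) < \<delta>" by simp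
  have "norm (lam (t N)) \<le> norm (lam (t N) - a (t N)) + norm (a (t N))"
    using norm_triangle_ineq[of "lam (t N) - a (t N)" "a (t N)"] by simp
  also have "\<dots> < \<delta>" using bound[of N] j by simp
  finally show False using sd[of "r N"] by (simp add: t_def)
qed



lemma sq_bound_from_sum:
  fixes u :: "nat \<Rightarrow> real"
  assumes "\<And>N. (\<Sum>n<N. u n ^ 2) \<le> B ^ 2" "0 \<le> B"
  shows "\<bar>u n\<bar> \<le> B"
proof -
  have "u n ^ 2 \<le> (\<Sum>m<Suc n. u m ^ 2)"
    by (simp add: sum_nonneg)
  also have "\<dots> \<le> B^2" by (rule assms(1))
  finally have "\<bar>u n\<bar> ^ 2 \<le> B^2" by simp
  then show ?thesis using assms(2) by (rule power2_le_imp_le)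
qed

lemma limsup_imp_compact:
  fixes p :: ereal and q :: real and lam :: "nat \<Rightarrow> complex"
  assumes p: "2 \<le> p" and q: "2 \<le> q" and ls: "limsup (\<lambda>n. ereal (norm (lam n))) = 0"
  shows "multiplier_compact p q lam"
  unfolding multiplier_compact_def
proof (intro allI impI)
  fix F :: "nat \<Rightarrow> complex \<Rightarrow> complex" and B :: real
  assume hF: "\<forall>k. F k \<in> hardy_space p \<and> hardy_norm p (F k) \<le> ereal B"
  have q0: "0 < q" using q by simp
  define c where "c k n = taylor_coeff (F k) n" for k n
  have l2: "(\<Sum>n<N. norm (c k n)^2) \<le> B^2" for k N
    using coeff_l2[of "F k" p B N] hF p by (simp add: c_def)
  have B0: "0 \<le> B" using coeff_l2[of "F 0" p B 0] hF p by simp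
  have cb: "norm (c k n) \<le> B" for k n
    using sq_bound_from_sum[of "\<lambda>n. norm (c k n)" B n] l2 B0 by simp
  obtain r :: "nat \<Rightarrow> nat" where r: "strict_mono r" and conv: "\<forall>n. \<exists>l. (\<lambda>j. c (r j) n) \<longlonglongrightarrow> l"
    using diag_subseq[of c B] cb by blast
  from conv have "\<exists>d. \<forall>n. (\<lambda>j. c (r j) n) \<longlonglongrightarrow> d n" by (rule choice)
  then obtain d where d: "\<And>n. (\<lambda>j. c (r j) n) \<longlonglongrightarrow> d n" by blast
  have dl2: "(\<Sum>n<N. norm (d n)^2) \<le> B^2" for N
  proof (rule tendsto_le[OF trivial_limit_sequentially])
    show "(\<lambda>j. B^2) \<longlonglongrightarrow> B^2" by simp
    show "(\<lambda>j. \<Sum>n<N. norm (c (r j) n)^2) \<longlonglongrightarrow> (\<Sum>n<N. norm (d n)^2)"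
      by (intro tendsto_intros d)
    show "\<forall>\<^sub>F j in sequentially. (\<Sum>n<N. norm (c (r j) n)^2) \<le> B^2" using l2 by simp
  qed
  have db: "norm (d n) \<le> B" for n
    using sq_bound_from_sum[of "\<lambda>n. norm (d n)" B n] dl2 B0 by simp
  have sd2: "summable (\<lambda>n. norm (d n)^2)"
  proof (rule bounded_imp_summable[of _ "B^2"])
    fix n show "sum (\<lambda>n. norm (d n)^2) {..n} \<le> B^2"
      using dl2[of "Suc n"] by (simp only: lessThan_Suc_atMost)
  qed simp
  have lamn: "(\<lambda>n. norm (lam n)) \<longlonglongrightarrow> 0"
  proof (rule order_tendstoI)
    fix y :: real assume "y < 0"
    then show "\<forall>\<^sub>F n in sequentially. y < norm (lam n)"
      by (intro always_eventually allI) (auto intro: less_le_trans)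
  next
    fix y :: real assume "0 < y"
    then have "limsup (\<lambda>n. ereal (norm (lam n))) < ereal y" using ls by simp
    from Limsup_lessD[OF this] show "\<forall>\<^sub>F n in sequentially. norm (lam n) < y" by simp
  qed
  then have "lam \<longlonglongrightarrow> 0" by (rule tendsto_norm_zero_cancel)
  then have "Bseq lam" by (intro convergent_imp_Bseq convergentI)
  then obtain L where L0: "0 < L" and Lb: "\<And>n. norm (lam n) \<le> L" by (auto elim: BseqE)
  define e where "e j n = c (r j) n - d n" for j n
  have e2: "(\<Sum>n<N. norm (e j n)^2) \<le> 4*B^2" for j N
  proof -
    have "norm (e j n)^2 \<le> 2*norm (c (r j) n)^2 + 2*norm (d n)^2" for n
    proof -
      have "norm (e j n) \<le> norm (c (r j) n) + norm (d n)" unfolding e_def by (rule norm_triangle_ineq4)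
      then have "norm (e j n)^2 \<le> (norm (c (r j) n) + norm (d n))^2" by (intro power_mono) auto
      moreover have "0 \<le> (norm (c (r j) n) - norm (d n))^2" by simp
      ultimately show ?thesis unfolding power2_sum power2_diff by linarith
    qed
    then have "(\<Sum>n<N. norm (e j n)^2) \<le> (\<Sum>n<N. 2*norm (c (r j) n)^2 + 2*norm (d n)^2)"
      by (intro sum_mono)
    also have "\<dots> = 2*(\<Sum>n<N. norm (c (r j) n)^2) + 2*(\<Sum>n<N. norm (d n)^2)"
      by (simp add: sum.distrib sum_distrib_left)
    also have "\<dots> \<le> 2*B^2 + 2*B^2" using l2 dl2 by (intro add_mono) auto
    finally show ?thesis by simp
  qed
  have eb: "norm (e j n) \<le> 2*B" for j n
  proof -
    have "norm (e j n) \<le> norm (c (r j) n) + norm (d n)" unfolding e_def by (rule norm_triangle_ineq4)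
    also have "\<dots> \<le> B + B" using cb db by (intro add_mono)
    finally show ?thesis by simp
  qed
  have se2: "summable (\<lambda>n. norm (e j n)^2)" for j
  proof (rule bounded_imp_summable[of _ "4*B^2"])
    fix n show "sum (\<lambda>n. norm (e j n)^2) {..n} \<le> 4*B^2"
      using e2[of j "Suc n"] by (simp only: lessThan_Suc_atMost)
  qed simp
  have se2s: "(\<Sum>n. norm (e j n)^2) \<le> 4*B^2" for j
    by (rule suminf_le_const[OF se2 e2])
  define K0 where "K0 = (2*B) powr (q-2)"
  have K0: "0 \<le> K0" by (simp add: K0_def)
  have pw: "norm w powr q \<le> K0 * norm w^2" if w: "norm w \<le> 2*B" for w :: complex
  proof (cases "w = 0")
    case True then show ?thesis using q by simp
  next
    case False
    have "norm w powr q = norm w powr ((q-2) + 2)" by simp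
    also have "\<dots> = norm w powr (q-2) * norm w powr 2"
      by (rule powr_add)
    also have "\<dots> = norm w powr (q-2) * norm w^2" using False by (simp add: powr_numeral)
    also have "\<dots> \<le> K0 * norm w^2" unfolding K0_def using w q
      by (intro mult_right_mono powr_mono2) auto
    finally show ?thesis .
  qed
  have fb: "norm (lam n * w) powr q \<le> L powr q * (K0 * norm w^2)" if w: "norm w \<le> 2*B" for n and w :: complex
  proof -
    have "norm (lam n * w) powr q = norm (lam n) powr q * norm w powr q" by (simp add: norm_mult powr_mult)
    also have "\<dots> \<le> L powr q * (K0 * norm w^2)"
      using Lb[of n] pw[OF w] q by (intro mult_mono powr_mono2) auto
    finally show ?thesis .
  qed
  define a where "a n = lam n * d n" for n
  have a_lq: "in_lq q a"
    unfolding in_lq_def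
  proof (rule summable_comparison_test'[where N=0])
    show "summable (\<lambda>n. (L powr q * K0) * norm (d n)^2)" using sd2 by (rule summable_mult)
    fix n
    have "norm (d n) \<le> 2*B" using db[of n] B0 by simp
    then show "norm (norm (a n) powr q) \<le> (L powr q * K0) * norm (d n)^2"
      using fb[of "d n" n] by (simp add: a_def mult_ac)
  qed
  have md: "multiplier lam (F (r j)) n - a n = lam n * e j n" for j n
    by (simp add: multiplier_def c_def a_def e_def algebra_simps)
  define S where "S j = (\<Sum>n. norm (lam n * e j n) powr q)" for j
  have sS: "summable (\<lambda>n. norm (lam n * e j n) powr q)" for j
  proof (rule summable_comparison_test'[where N=0])
    show "summable (\<lambda>n. (L powr q * K0) * norm (e j n)^2)" using se2 by (rule summable_mult)
    fix n
    show "norm (norm (lam n * e j n) powr q) \<le> (L powr q * K0) * norm (e j n)^2"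
      using fb[OF eb[of j n], of n] by (simp add: mult_ac)
  qed
  have S0: "0 \<le> S j" for j unfolding S_def by (intro suminf_nonneg sS) auto
  have Slim: "S \<longlonglongrightarrow> 0"
  proof (rule order_tendstoI)
    fix y :: real assume "y < 0"
    then show "\<forall>\<^sub>F j in sequentially. y < S j"
      using S0 by (intro always_eventually allI) (auto intro: less_le_trans)
  next
    fix \<epsilon> :: real assume \<epsilon>: "0 < \<epsilon>"
    define K where "K = K0 * (4*B^2)"
    have K: "0 \<le> K" using K0 by (simp add: K_def)
    define \<eta> where "\<eta> = (\<epsilon> / (2*(K+1))) powr (1/q)"
    have \<eta>: "0 < \<eta>" using \<epsilon> K by (simp add: \<eta>_def)
    have \<eta>q: "\<eta> powr q = \<epsilon> / (2*(K+1))" using q0 \<epsilon> K by (simp add: \<eta>_def powr_powr)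
    have "\<forall>\<^sub>F n in sequentially. norm (lam n) < \<eta>" using lamn \<eta> by (rule order_tendstoD)
    then obtain N where N: "\<And>n. N \<le> n \<Longrightarrow> norm (lam n) < \<eta>"
      unfolding eventually_sequentially by blast
    have tail: "S j \<le> (\<Sum>n<N. norm (lam n * e j n) powr q) + \<epsilon>/2" for j
    proof -
      define h where "h n = (if n < N then norm (lam n * e j n) powr q else 0)" for n
      have hs: "summable h" unfolding h_def by (rule summable_finite[of "{..<N}"]) auto
      have hsum: "suminf h = (\<Sum>n<N. norm (lam n * e j n) powr q)"
        unfolding h_def by (subst suminf_finite[of "{..<N}"]) auto
      have le: "norm (lam n * e j n) powr q \<le> h n + \<eta> powr q * (K0 * norm (e j n)^2)" for n
      proof (cases "n < N")
        case True then show ?thesis using K0 by (simp add: h_def)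
      next
        case False
        have "norm (lam n * e j n) powr q = norm (lam n) powr q * norm (e j n) powr q"
          by (simp add: norm_mult powr_mult)
        also have "\<dots> \<le> \<eta> powr q * (K0 * norm (e j n)^2)"
          using N[of n] False pw[OF eb[of j n]] q by (intro mult_mono powr_mono2) auto
        finally show ?thesis using False by (simp add: h_def)
      qed
      have s2: "summable (\<lambda>n. \<eta> powr q * (K0 * norm (e j n)^2))"
        by (intro summable_mult se2)
      have "S j \<le> (\<Sum>n. h n + \<eta> powr q * (K0 * norm (e j n)^2))"
        unfolding S_def by (rule suminf_le[OF le sS summable_add[OF hs s2]])
      also have "\<dots> = suminf h + (\<Sum>n. \<eta> powr q * (K0 * norm (e j n)^2))"
        by (rule suminf_add[OF hs s2, symmetric])
      also have "(\<Sum>n. \<eta> powr q * (K0 * norm (e j n)^2)) = \<eta> powr q * (K0 * (\<Sum>n. norm (e j n)^2))"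
        using se2 by (simp add: suminf_mult summable_mult)
      also have "\<eta> powr q * (K0 * (\<Sum>n. norm (e j n)^2)) \<le> \<eta> powr q * K"
        unfolding K_def using se2s[of j] K0 by (intro mult_left_mono) auto
      also have "\<eta> powr q * K \<le> \<epsilon>/2"
        using K \<epsilon> by (simp add: \<eta>q field_simps)
      finally show ?thesis by (simp add: hsum)
    qed
    have head: "(\<lambda>j. \<Sum>n<N. norm (lam n * e j n) powr q) \<longlonglongrightarrow> 0"
    proof (rule tendsto_null_sum)
      fix n
      have "(\<lambda>j. e j n) \<longlonglongrightarrow> 0"
        using tendsto_diff[OF d[of n] tendsto_const[of "d n"]] by (simp add: e_def)
      then have "(\<lambda>j. norm (lam n * e j n)) \<longlonglongrightarrow> 0"
        by (intro tendsto_norm_zero tendsto_mult_right_zero)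
      then show "(\<lambda>j. norm (lam n * e j n) powr q) \<longlonglongrightarrow> 0"
        by (rule tendsto_zero_powrI[OF _ tendsto_const]) (use q0 in auto)
    qed
    have "\<forall>\<^sub>F j in sequentially. (\<Sum>n<N. norm (lam n * e j n) powr q) < \<epsilon>/2"
      using head \<epsilon> by (intro order_tendstoD) auto
    then show "\<forall>\<^sub>F j in sequentially. S j < \<epsilon>"
    proof (rule eventually_mono)
      fix j assume "(\<Sum>n<N. norm (lam n * e j n) powr q) < \<epsilon>/2"
      with tail[of j] show "S j < \<epsilon>" by linarith
    qed
  qed
  show "\<exists>r a. strict_mono r \<and> in_lq q a \<and>
          (\<lambda>j. lq_norm q (\<lambda>n. multiplier lam (F (r j)) n - a n)) \<longlonglongrightarrow> 0"
  proof (intro exI conjI)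
    show "strict_mono r" by (rule r)
    show "in_lq q a" by (rule a_lq)
    have "(\<lambda>j. S j powr (1/q)) \<longlonglongrightarrow> 0"
      by (rule tendsto_zero_powrI[OF Slim tendsto_const]) (use S0 q0 in auto)
    then show "(\<lambda>j. lq_norm q (\<lambda>n. multiplier lam (F (r j)) n - a n)) \<longlonglongrightarrow> 0"
      by (simp add: lq_norm_def md S_def)
  qed
qed


theorem corollary2p6:
  fixes p :: ereal and q :: real and lam :: "nat \<Rightarrow> complex"
  assumes "2 \<le> p" and "2 \<le> q"
    and "multiplier_bounded p q lam"
  shows "multiplier_compact p q lam \<longleftrightarrow> limsup (\<lambda>n. ereal (norm (lam n))) = 0"
  using compact_imp_limsup[OF assms(1,2)] limsup_imp_compact[OF assms(1,2)] by blast

end
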